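(* If a topological space $X$ admits an $\omega^\omega$-base at a point $x\in X$, then $X$ is $(\omega_1,\omega)_k$-equiconvergent at $x$.
   Context: $X$ has an $\omega^\omega$-base at $x$ if there is a neighborhood base $(U_\alpha)_{\alpha\in\omega^\omega}$ at $x$ with $U_\beta\subseteq U_\alpha$ whenever $\alpha\le\beta$ pointwise in $\omega^\omega$. $X$ is $(\omega_1,\omega)_k$-equiconvergent at $x$ if for every indexed family $\{x_\alpha\}_{\alpha\in\omega_1}$ of sequences in $X^\omega$ converging to $x$ there is a countably infinite $\Lambda\subseteq\omega_1$ such that for every neighborhood $O_x$ of $x$ there is $n\in\omega$ with $x_\alpha(m)\in O_x$ for all $m\ge n$ and all $\alpha\in\Lambda$. *)

theory Defs
  imports "HOL-Analysis.Analysis"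
begin

definition nbhd :: "'a topology \<Rightarrow> 'a \<Rightarrow> 'a set \<Rightarrow> bool" where
  "nbhd X x N \<longleftrightarrow> (\<exists>V. openin X V \<and> x \<in> V \<and> V \<subseteq> N)"

definition has_omega_omega_base :: "'a topology \<Rightarrow> 'a \<Rightarrow> bool" where
  "has_omega_omega_base X x \<longleftrightarrow>
     (\<exists>U :: (nat \<Rightarrow> nat) \<Rightarrow> 'a set.
        (\<forall>\<alpha>. nbhd X x (U \<alpha>)) \<and>
        (\<forall>N. nbhd X x N \<longrightarrow> (\<exists>\<alpha>. U \<alpha> \<subseteq> N)) \<and>
        (\<forall>\<alpha> \<beta>. (\<forall>n. \<alpha> n \<le> \<beta> n) \<longrightarrow> U \<beta> \<subseteq> U \<alpha>))"

text \<open>omega_1 is represented by an arbitrary index set of cardinality aleph_1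
  (= cardSuc of the cardinal of nat), taken inside an index type 'i.\<close>
definition omega1_equiconvergent_at :: "'a topology \<Rightarrow> 'a \<Rightarrow> 'i itself \<Rightarrow> bool" where
  "omega1_equiconvergent_at X x (idx :: 'i itself) \<longleftrightarrow>
     (\<forall>(I :: 'i set) (s :: 'i \<Rightarrow> nat \<Rightarrow> 'a).
        ordIso2 (card_of I) (cardSuc natLeq) \<longrightarrow>
        (\<forall>\<alpha>\<in>I. range (s \<alpha>) \<subseteq> topspace X \<and> limitin X (s \<alpha>) x sequentially) \<longrightarrow>
        (\<exists>\<Lambda>. \<Lambda> \<subseteq> I \<and> countable \<Lambda> \<and> infinite \<Lambda> \<and>
           (\<forall>W. nbhd X x W \<longrightarrow> (\<exists>n. \<forall>m\<ge>n. \<forall>\<alpha>\<in>\<Lambda>. s \<alpha> m \<in> W))))"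

end

theory Submission
  imports Defs "HOL-Library.Countable_Set_Type"
begin

lemma uncountable_aleph1:
  assumes "ordIso2 (card_of (I::'i set)) (cardSuc natLeq)"
  shows "uncountable I"
proof
  assume "countable I"
  then have "ordLeq2 (card_of I) natLeq" by (simp add: countable_card_le_natLeq)
  moreover have "ordLess2 natLeq (cardSuc natLeq)" by (simp add: cardSuc_greater natLeq_Card_order)
  ultimately show False using assms
    by (meson not_ordLess_ordLeq ordIso_iff_ordLeq ordLeq_transitive)
qed

definition good :: "(nat \<Rightarrow> 'a) \<Rightarrow> ((nat \<Rightarrow> nat) \<Rightarrow> 'a set) \<Rightarrow> nat list \<Rightarrow> bool" where
  "good s U t \<longleftrightarrow> (\<forall>\<phi>. (\<forall>i<length t. \<phi> i = t!i) \<longrightarrow> (\<forall>m\<ge>length t. s m \<in> U \<phi>))"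

lemma bar:
  assumes conv: "\<And>\<psi>. \<exists>n. \<forall>m\<ge>n. s m \<in> U \<psi>"
    and mono: "\<And>a b. (\<forall>n. a n \<le> b n) \<Longrightarrow> U b \<subseteq> U a"
  shows "\<exists>k. good s U (map \<psi> [0..<k])"
proof (rule ccontr)
  assume "\<not> ?thesis"
  then have "\<forall>k. \<exists>\<phi> m. (\<forall>i<k. \<phi> i = \<psi> i) \<and> m \<ge> k \<and> s m \<notin> U \<phi>"
    by (auto simp: good_def)
  then obtain \<Phi> M where PM: "\<And>k. (\<forall>i<k. \<Phi> k i = \<psi> i) \<and> M k \<ge> k \<and> s (M k) \<notin> U (\<Phi> k)"
    by metis
  define \<Psi> where "\<Psi> c = \<psi> c + (\<Sum>k\<le>c. \<Phi> k c)" for c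
  have le: "\<Phi> k c \<le> \<Psi> c" for k c
  proof (cases "k \<le> c")
    case True
    have "\<Phi> k c \<le> (\<Sum>k\<le>c. \<Phi> k c)"
      by (rule member_le_sum) (use True in auto)
    then show ?thesis unfolding \<Psi>_def by simp
  next
    case False
    then show ?thesis using PM[of k] unfolding \<Psi>_def by simp
  qed
  obtain n where n: "\<forall>m\<ge>n. s m \<in> U \<Psi>" using conv by blast
  have "s (M n) \<in> U \<Psi>" using n PM[of n] by blast
  moreover have "U \<Psi> \<subseteq> U (\<Phi> n)" using mono le by blast
  ultimately show False using PM[of n] by blast
qed

fun chain :: "(nat \<Rightarrow> 'i set) \<Rightarrow> nat \<Rightarrow> 'i set" where
  "chain A 0 = {}"
| "chain A (Suc n) = insert (SOME b. b \<in> A n \<and> b \<notin> chain A n) (chain A n)"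

lemma chain_finite: "finite (chain A n)"
  by (induction n) auto

lemma chain_step:
  assumes "\<And>n. infinite (A n)"
  shows "(SOME b. b \<in> A n \<and> b \<notin> chain A n) \<in> A n \<and> (SOME b. b \<in> A n \<and> b \<notin> chain A n) \<notin> chain A n"
proof -
  have "\<exists>b. b \<in> A n \<and> b \<notin> chain A n"
    using assms[of n] chain_finite[of A n] by (meson finite_subset subsetI)
  then show ?thesis by (rule someI_ex)
qed

lemma chain_card:
  assumes "\<And>n. infinite (A n)"
  shows "card (chain A n) = n"
proof (induction n)
  case (Suc n)
  have "(SOME b. b \<in> A n \<and> b \<notin> chain A n) \<notin> chain A n"
    using chain_step[of A, OF assms] by blast
  then show ?case using Suc chain_finite[of A n] by simp
qed simp

lemma chain_mono: "chain A m \<subseteq> chain A (m + d)"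
  by (induction d) auto

lemma chain_sub:
  assumes "\<And>n. infinite (A n)"
  shows "chain A n \<subseteq> (\<Union>k. A k)"
  by (induction n) (use chain_step[of A, OF assms] in auto)

lemma chain_late:
  assumes "\<And>n. infinite (A n)"
  shows "b \<in> chain A m \<Longrightarrow> b \<notin> chain A j \<Longrightarrow> \<exists>n\<ge>j. b \<in> A n"
proof (induction m)
  case 0 then show ?case by simp
next
  case (Suc m)
  show ?case
  proof (cases "b \<in> chain A m")
    case True then show ?thesis using Suc by blast
  next
    case False
    then have "b = (SOME b. b \<in> A m \<and> b \<notin> chain A m)" using Suc.prems by simp
    then have "b \<in> A m" using chain_step[of A, OF assms] by simp
    moreover have "j \<le> m"
    proof (rule ccontr)
      assume "\<not> j \<le> m"
      then have "chain A (Suc m) \<subseteq> chain A j"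
        using chain_mono[of A "Suc m" "j - Suc m"] by simp
      then show False using Suc.prems by blast
    qed
    ultimately show ?thesis by blast
  qed
qed


theorem theorem4p1:
  fixes X :: "'a topology" and x :: 'a
  assumes "x \<in> topspace X"
    and "has_omega_omega_base X x"
  shows "omega1_equiconvergent_at X x TYPE('i)"
proof -
  obtain U :: "(nat \<Rightarrow> nat) \<Rightarrow> 'a set" where
    Unb: "\<And>\<alpha>. nbhd X x (U \<alpha>)" and
    cof: "\<And>N. nbhd X x N \<Longrightarrow> \<exists>\<alpha>. U \<alpha> \<subseteq> N" and
    mono: "\<And>a b. (\<forall>n. a n \<le> b n) \<Longrightarrow> U b \<subseteq> U a"
    using assms(2) unfolding has_omega_omega_base_def by metis
  show ?thesis unfolding omega1_equiconvergent_at_def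
  proof (intro allI impI)
    fix I :: "'i set" and s :: "'i \<Rightarrow> nat \<Rightarrow> 'a"
    assume card: "ordIso2 (card_of I) (cardSuc natLeq)"
      and conv: "\<forall>\<alpha>\<in>I. range (s \<alpha>) \<subseteq> topspace X \<and> limitin X (s \<alpha>) x sequentially"
    have evN: "eventually (\<lambda>m. s \<alpha> m \<in> N) sequentially" if h1: "\<alpha> \<in> I" and h2: "nbhd X x N" for \<alpha> N
    proof -
      obtain V where V: "openin X V" "x \<in> V" "V \<subseteq> N" using h2 unfolding nbhd_def by blast
      have "eventually (\<lambda>m. s \<alpha> m \<in> V) sequentially"
        using conv h1 V unfolding limitin_def by blast
      then show ?thesis by eventually_elim (use V in blast)
    qed
    have convU: "\<exists>n. \<forall>m\<ge>n. s \<alpha> m \<in> U \<psi>" if "\<alpha> \<in> I" for \<alpha> \<psi>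
      using evN[OF that Unb[of \<psi>]] unfolding eventually_sequentially by blast
    define Z where "Z \<alpha> = {t. good (s \<alpha>) U t}" for \<alpha>
    have unc: "uncountable I" using uncountable_aleph1[OF card] .
    have star: "\<exists>a\<in>I. \<forall>F. finite F \<and> F \<subseteq> Z a \<longrightarrow> infinite {\<beta>\<in>I. F \<subseteq> Z \<beta>}"
    proof (rule ccontr)
      assume "\<not> ?thesis"
      then have "\<forall>a\<in>I. \<exists>F. finite F \<and> F \<subseteq> Z a \<and> finite {\<beta>\<in>I. F \<subseteq> Z \<beta>}" by blast
      then obtain G where G: "\<And>a. a \<in> I \<Longrightarrow> finite (G a) \<and> G a \<subseteq> Z a \<and> finite {\<beta>\<in>I. G a \<subseteq> Z \<beta>}"
        by metis
      have sub: "I \<subseteq> (\<Union>F\<in>G ` I. {\<beta>\<in>I. F \<subseteq> Z \<beta>})" using G by blast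
      have "countable (G ` I)"
        by (rule countable_subset[OF _ countable_Collect_finite]) (use G in auto)
      then have "countable (\<Union>F\<in>G ` I. {\<beta>\<in>I. F \<subseteq> Z \<beta>})"
        by (rule countable_UN) (use G in \<open>auto intro: countable_finite\<close>)
      then show False using sub unc countable_subset by blast
    qed
    then obtain a where aI: "a \<in> I" and
      aF: "\<And>F. finite F \<Longrightarrow> F \<subseteq> Z a \<Longrightarrow> infinite {\<beta>\<in>I. F \<subseteq> Z \<beta>}" by blast
    define A where "A n = {\<beta>\<in>I. (Z a \<inter> (from_nat :: nat \<Rightarrow> nat list) ` {..n}) \<subseteq> Z \<beta>}" for n
    have Ainf: "infinite (A n)" for n
      unfolding A_def by (rule aF) auto
    define \<Lambda> where "\<Lambda> = (\<Union>n. chain A n)"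
    have LI: "\<Lambda> \<subseteq> I" unfolding \<Lambda>_def using chain_sub[of A, OF Ainf] unfolding A_def by blast
    have Lc: "countable \<Lambda>" unfolding \<Lambda>_def
      by (rule countable_UN) (auto intro: countable_finite chain_finite)
    have Linf: "infinite \<Lambda>"
    proof
      assume fin: "finite \<Lambda>"
      have "chain A (Suc (card \<Lambda>)) \<subseteq> \<Lambda>" unfolding \<Lambda>_def by blast
      then have "card (chain A (Suc (card \<Lambda>))) \<le> card \<Lambda>" using card_mono fin by blast
      then show False using chain_card[of A "Suc (card \<Lambda>)", OF Ainf] by linarith
    qed
    show "\<exists>\<Lambda>. \<Lambda> \<subseteq> I \<and> countable \<Lambda> \<and> infinite \<Lambda> \<and>
           (\<forall>W. nbhd X x W \<longrightarrow> (\<exists>n. \<forall>m\<ge>n. \<forall>\<alpha>\<in>\<Lambda>. s \<alpha> m \<in> W))"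
    proof (rule exI[of _ \<Lambda>], intro conjI allI impI)
      show "\<Lambda> \<subseteq> I" "countable \<Lambda>" "infinite \<Lambda>" by fact+
      fix W assume W: "nbhd X x W"
      obtain \<psi> where \<psi>: "U \<psi> \<subseteq> W" using cof[OF W] by blast
      obtain k where k: "good (s a) U (map \<psi> [0..<k])"
        using bar[of "s a" U \<psi>] convU[OF aI] mono by blast
      define t where "t = map \<psi> [0..<k]"
      have tZ: "t \<in> Z a" using k unfolding Z_def t_def by simp
      define j where "j = to_nat t"
      have tj: "t = from_nat j" unfolding j_def by simp
      define B where "B = chain A j"
      have Bfin: "finite B" unfolding B_def by (rule chain_finite)
      have good_out: "\<forall>m\<ge>k. s \<beta> m \<in> U \<psi>" if b1: "\<beta> \<in> \<Lambda>" and b2: "\<beta> \<notin> B" for \<beta>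
      proof -
        obtain m0 where "\<beta> \<in> chain A m0" using b1 unfolding \<Lambda>_def by blast
        then obtain n where n: "n \<ge> j" "\<beta> \<in> A n"
          using chain_late[of A, OF Ainf] b2 unfolding B_def by blast
        have "t \<in> Z a \<inter> (from_nat :: nat \<Rightarrow> nat list) ` {..n}" using tZ tj n(1) by auto
        then have "t \<in> Z \<beta>" using n(2) unfolding A_def by blast
        then have "good (s \<beta>) U t" unfolding Z_def by simp
        then show ?thesis unfolding good_def t_def by simp
      qed
      have "eventually (\<lambda>m. \<forall>\<beta>\<in>B. s \<beta> m \<in> U \<psi>) sequentially"
      proof (rule eventually_ball_finite[OF Bfin], rule ballI)
        fix \<beta> assume "\<beta> \<in> B"
        then have "\<beta> \<in> I" using LI unfolding B_def \<Lambda>_def by blast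
        then show "eventually (\<lambda>m. s \<beta> m \<in> U \<psi>) sequentially"
          using evN Unb by blast
      qed
      then obtain N where N: "\<And>m \<beta>. m \<ge> N \<Longrightarrow> \<beta> \<in> B \<Longrightarrow> s \<beta> m \<in> U \<psi>"
        unfolding eventually_sequentially by blast
      show "\<exists>n. \<forall>m\<ge>n. \<forall>\<alpha>\<in>\<Lambda>. s \<alpha> m \<in> W"
      proof (rule exI[of _ "max N k"], intro allI impI ballI)
        fix m \<alpha> assume m: "max N k \<le> m" and "\<alpha> \<in> \<Lambda>"
        then have "s \<alpha> m \<in> U \<psi>" using N good_out by (cases "\<alpha> \<in> B") auto
        then show "s \<alpha> m \<in> W" using \<psi> by blast
      qed
    qed
  qed
qed

end
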